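(* Let $H$ be a non-complete, connected, regular graph. For every $G\in\operatorname{obs}^\ast(H)$ there are distinct vertices $u,v\in V(G)$ that are true twins in $G$ (i.e., $N_G[u]=N_G[v]$) and satisfy $G-u\cong H\cong G-v$.
   Context: All graphs are finite, simple and loopless. $N[x]$ denotes the closed neighbourhood of $x$. A full-homomorphism $\varphi\colon G\to H$ is a map $V(G)\to V(H)$ such that for all $x,y\in V(G)$, $xy\in E(G)$ if and only if $\varphi(x)\varphi(y)\in E(H)$. A full $H$-colouring of $G$ is a full-homomorphism $G\to H$. A minimal $H$-obstruction is a graph $G$ that admits no full $H$-colouring while every proper induced subgraph of $G$ admits one; $\operatorname{obs}(H)$ denotes the set of minimal $H$-obstructions (up to isomorphism), and $\operatorname{obs}^\ast(H)$ the set of minimal $H$-obstructions on exactly $|V(H)|+1$ vertices. *)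

theory Defs
  imports Main
begin

definition sgraph :: "'a set \<Rightarrow> ('a \<Rightarrow> 'a \<Rightarrow> bool) \<Rightarrow> bool" where
  "sgraph V E \<longleftrightarrow> finite V \<and> (\<forall>x y. E x y \<longrightarrow> x \<in> V \<and> y \<in> V)
     \<and> (\<forall>x y. E x y \<longrightarrow> E y x) \<and> (\<forall>x. \<not> E x x)"

definition full_hom :: "'a set \<Rightarrow> ('a \<Rightarrow> 'a \<Rightarrow> bool) \<Rightarrow> 'b set \<Rightarrow> ('b \<Rightarrow> 'b \<Rightarrow> bool)
    \<Rightarrow> ('a \<Rightarrow> 'b) \<Rightarrow> bool" where
  "full_hom V E W F \<phi> \<longleftrightarrow> \<phi> ` V \<subseteq> W \<and> (\<forall>x\<in>V. \<forall>y\<in>V. E x y \<longleftrightarrow> F (\<phi> x) (\<phi> y))"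

definition full_colourable :: "'a set \<Rightarrow> ('a \<Rightarrow> 'a \<Rightarrow> bool) \<Rightarrow> 'b set \<Rightarrow> ('b \<Rightarrow> 'b \<Rightarrow> bool) \<Rightarrow> bool" where
  "full_colourable V E W F \<longleftrightarrow> (\<exists>\<phi>. full_hom V E W F \<phi>)"

definition induced :: "('a \<Rightarrow> 'a \<Rightarrow> bool) \<Rightarrow> 'a set \<Rightarrow> 'a \<Rightarrow> 'a \<Rightarrow> bool" where
  "induced E S = (\<lambda>x y. x \<in> S \<and> y \<in> S \<and> E x y)"

definition min_obstruction :: "'a set \<Rightarrow> ('a \<Rightarrow> 'a \<Rightarrow> bool) \<Rightarrow> 'b set \<Rightarrow> ('b \<Rightarrow> 'b \<Rightarrow> bool) \<Rightarrow> bool" where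
  "min_obstruction V E W F \<longleftrightarrow> sgraph V E \<and> \<not> full_colourable V E W F
     \<and> (\<forall>S. S \<subset> V \<longrightarrow> full_colourable S (induced E S) W F)"

definition in_obs_star :: "'a set \<Rightarrow> ('a \<Rightarrow> 'a \<Rightarrow> bool) \<Rightarrow> 'b set \<Rightarrow> ('b \<Rightarrow> 'b \<Rightarrow> bool) \<Rightarrow> bool" where
  "in_obs_star V E W F \<longleftrightarrow> min_obstruction V E W F \<and> card V = card W + 1"

definition graph_iso :: "'a set \<Rightarrow> ('a \<Rightarrow> 'a \<Rightarrow> bool) \<Rightarrow> 'b set \<Rightarrow> ('b \<Rightarrow> 'b \<Rightarrow> bool) \<Rightarrow> bool" where
  "graph_iso V E W F \<longleftrightarrow> (\<exists>f. bij_betw f V W \<and> (\<forall>x\<in>V. \<forall>y\<in>V. E x y \<longleftrightarrow> F (f x) (f y)))"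

definition closed_nbhd :: "'a set \<Rightarrow> ('a \<Rightarrow> 'a \<Rightarrow> bool) \<Rightarrow> 'a \<Rightarrow> 'a set" where
  "closed_nbhd V E x = {y \<in> V. y = x \<or> E x y}"

definition regular :: "'a set \<Rightarrow> ('a \<Rightarrow> 'a \<Rightarrow> bool) \<Rightarrow> bool" where
  "regular V E \<longleftrightarrow> (\<exists>k. \<forall>x\<in>V. card {y \<in> V. E x y} = k)"

definition connected_graph :: "'a set \<Rightarrow> ('a \<Rightarrow> 'a \<Rightarrow> bool) \<Rightarrow> bool" where
  "connected_graph V E \<longleftrightarrow> V \<noteq> {} \<and> (\<forall>x\<in>V. \<forall>y\<in>V. E\<^sup>*\<^sup>* x y)"

definition complete_graph :: "'a set \<Rightarrow> ('a \<Rightarrow> 'a \<Rightarrow> bool) \<Rightarrow> bool" where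
  "complete_graph V E \<longleftrightarrow> (\<forall>x\<in>V. \<forall>y\<in>V. x \<noteq> y \<longrightarrow> E x y)"

end

theory Submission
  imports Defs
begin

lemma pd:
  assumes mo: "min_obstruction V E W F" and xV: "x \<in> V" and yV: "y \<in> V" and ne: "x \<noteq> y"
    and same: "\<forall>t\<in>V. E x t \<longleftrightarrow> E y t"
  shows False
proof -
  have sg: "sgraph V E" and nc: "\<not> full_colourable V E W F"
    and sub: "\<forall>S. S \<subset> V \<longrightarrow> full_colourable S (induced E S) W F"
    using mo unfolding min_obstruction_def by auto
  have sym: "\<And>a b. E a b \<Longrightarrow> E b a" and irr: "\<And>a. \<not> E a a" using sg unfolding sgraph_def by auto
  have "V - {x} \<subset> V" using xV by auto
  then obtain \<phi> where \<phi>: "full_hom (V-{x}) (induced E (V-{x})) W F \<phi>"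
    using sub unfolding full_colourable_def by blast
  define \<psi> where "\<psi> = \<phi>(x := \<phi> y)"
  have yS: "y \<in> V - {x}" using yV ne by auto
  have img: "\<psi> ` V \<subseteq> W" using \<phi> yS unfolding full_hom_def \<psi>_def by auto
  have key: "E a' b' \<longleftrightarrow> F (\<phi> a') (\<phi> b')" if "a'\<in>V-{x}" "b'\<in>V-{x}" for a' b'
    using \<phi> that unfolding full_hom_def induced_def by auto
  have adj: "E a b \<longleftrightarrow> F (\<psi> a) (\<psi> b)" if ab: "a\<in>V" "b\<in>V" for a b
  proof -
    define a' where "a' = (if a = x then y else a)"
    define b' where "b' = (if b = x then y else b)"
    have S: "a' \<in> V-{x}" "b' \<in> V-{x}" using ab yS a'_def b'_def by auto
    have "E a b \<longleftrightarrow> E a' b'"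
    proof (cases "a = x"; cases "b = x")
      assume "a = x" "b = x" thus ?thesis using irr a'_def b'_def by simp
    next
      assume "a = x" "b \<noteq> x" thus ?thesis using same ab a'_def b'_def by simp
    next
      assume h: "a \<noteq> x" "b = x"
      have e1: "E a x \<longleftrightarrow> E x a" using sym[of a x] sym[of x a] by (rule iffI)
      have e2: "E a y \<longleftrightarrow> E y a" using sym[of a y] sym[of y a] by (rule iffI)
      have e3: "E x a \<longleftrightarrow> E y a" using same ab(1) by blast
      have "a' = a" "b' = y" using h a'_def b'_def by auto
      thus ?thesis using e1 e2 e3 h by simp
    next
      assume "a \<noteq> x" "b \<noteq> x" thus ?thesis using a'_def b'_def by simp
    qed
    moreover have "\<psi> a = \<phi> a'" "\<psi> b = \<phi> b'" unfolding \<psi>_def a'_def b'_def by auto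
    ultimately show ?thesis using key[OF S] by simp
  qed
  have "full_hom V E W F \<psi>" unfolding full_hom_def using img adj by blast
  then have "full_colourable V E W F" unfolding full_colourable_def by blast
  with nc show False by simp
qed

lemma del_cases:
  assumes mo: "min_obstruction V E W F" and card: "card V = card W + 1" and fW: "finite W"
    and zV: "z \<in> V"
  shows "graph_iso (V-{z}) (induced E (V-{z})) W F \<or>
    (\<exists>x\<in>V. \<exists>y\<in>V. x \<noteq> z \<and> y \<noteq> z \<and> x \<noteq> y \<and> E z x \<and> \<not> E z y
        \<and> (\<forall>t\<in>V. t \<noteq> z \<longrightarrow> (E x t \<longleftrightarrow> E y t)))"
proof -
  have sg: "sgraph V E" and sub: "\<forall>S. S \<subset> V \<longrightarrow> full_colourable S (induced E S) W F"
    using mo unfolding min_obstruction_def by auto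
  have sym: "\<And>a b. E a b \<Longrightarrow> E b a" and fV: "finite V" using sg unfolding sgraph_def by auto
  have "V - {z} \<subset> V" using zV by auto
  then obtain \<phi> where \<phi>: "full_hom (V-{z}) (induced E (V-{z})) W F \<phi>"
    using sub unfolding full_colourable_def by blast
  have key: "E a b \<longleftrightarrow> F (\<phi> a) (\<phi> b)" if "a\<in>V-{z}" "b\<in>V-{z}" for a b
    using \<phi> that unfolding full_hom_def induced_def by auto
  have img: "\<phi> ` (V-{z}) \<subseteq> W" using \<phi> unfolding full_hom_def by auto
  show ?thesis
  proof (cases "inj_on \<phi> (V-{z})")
    case True
    have "card (\<phi> ` (V-{z})) = card W" using True card zV fV by (simp add: card_image)
    hence "\<phi> ` (V-{z}) = W" using card_subset_eq[OF fW img] by simp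
    hence "bij_betw \<phi> (V-{z}) W" using True unfolding bij_betw_def by simp
    thus ?thesis unfolding graph_iso_def induced_def using key by auto
  next
    case False
    then obtain x y where x: "x\<in>V-{z}" "y\<in>V-{z}" "x\<noteq>y" "\<phi> x = \<phi> y"
      unfolding inj_on_def by blast
    have agree: "E x t \<longleftrightarrow> E y t" if "t \<in> V-{z}" for t
      using key[OF x(1) that] key[OF x(2) that] x(4) by simp
    have "E x z \<noteq> E y z"
    proof
      assume "E x z = E y z"
      hence "\<forall>t\<in>V. E x t \<longleftrightarrow> E y t" using agree by blast
      thus False using pd[OF mo _ _ x(3)] x by blast
    qed
    then show ?thesis
    proof (cases "E z x")
      case True
      then have "\<not> E z y" using \<open>E x z \<noteq> E y z\<close> sym by blast
      then show ?thesis using True x agree by blast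
    next
      case False
      then have "E z y" using \<open>E x z \<noteq> E y z\<close> sym by blast
      then show ?thesis using False x agree by blast
    qed
  qed
qed

lemma exists_good:
  assumes mo: "min_obstruction V E W F" and card: "card V = card W + 1" and fW: "finite W"
  shows "\<exists>w\<in>V. graph_iso (V-{w}) (induced E (V-{w})) W F"
proof (rule ccontr)
  assume "\<not> ?thesis"
  hence spl: "\<forall>z\<in>V. \<exists>x\<in>V. \<exists>y\<in>V. x \<noteq> z \<and> y \<noteq> z \<and> x \<noteq> y \<and> E z x \<and> \<not> E z y
        \<and> (\<forall>t\<in>V. t \<noteq> z \<longrightarrow> (E x t \<longleftrightarrow> E y t))"
    using del_cases[OF mo card fW] by blast
  have sg: "sgraph V E" using mo unfolding min_obstruction_def by auto
  have sym: "\<And>a b. E a b \<Longrightarrow> E b a" and fV: "finite V" using sg unfolding sgraph_def by auto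
  have Vne: "V \<noteq> {}" using card by auto
  define m where "m = Max ((\<lambda>a. card {t\<in>V. E a t}) ` V)"
  have "m \<in> (\<lambda>a. card {t\<in>V. E a t}) ` V" unfolding m_def using fV Vne by (intro Max_in) auto
  then obtain x where xV: "x \<in> V" and xm: "card {t\<in>V. E x t} = m" by auto
  have mx: "card {t\<in>V. E a t} \<le> card {t\<in>V. E x t}" if "a\<in>V" for a
    unfolding xm m_def using fV that by (intro Max_ge) auto
  obtain p q where pq: "p\<in>V" "q\<in>V" "p\<noteq>x" "q\<noteq>x" "p\<noteq>q" "E x p" "\<not>E x q"
      "\<forall>t\<in>V. t\<noteq>x \<longrightarrow> (E p t \<longleftrightarrow> E q t)" using spl xV by blast
  obtain a b where ab: "a\<in>V" "b\<in>V" "a\<noteq>q" "b\<noteq>q" "a\<noteq>b" "E q a" "\<not>E q b"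
      "\<forall>t\<in>V. t\<noteq>q \<longrightarrow> (E a t \<longleftrightarrow> E b t)" using spl pq(2) by blast
  have "a \<noteq> x" using ab(6) pq(7) sym by blast
  hence "E p a" using pq(8) ab(1,6) by blast
  hence "E b p" using ab(8) pq(1,5) sym by blast
  have "b = x"
  proof (rule ccontr)
    assume "b \<noteq> x"
    hence "E q b" using pq(8) ab(2) \<open>E b p\<close> sym by blast
    thus False using ab(7) by simp
  qed
  have sub: "{t\<in>V. E x t} \<subset> {t\<in>V. E a t}"
  proof
    show "{t\<in>V. E x t} \<subseteq> {t\<in>V. E a t}"
    proof
      fix t assume "t \<in> {t\<in>V. E x t}"
      hence "t \<in> V" "E x t" by auto
      moreover have "t \<noteq> q" using pq(7) \<open>E x t\<close> by auto
      ultimately show "t \<in> {t\<in>V. E a t}" using ab(8) \<open>b = x\<close> by auto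
    qed
    show "{t\<in>V. E x t} \<noteq> {t\<in>V. E a t}" using pq(2,7) ab(6) sym by blast
  qed
  have "card {t\<in>V. E x t} < card {t\<in>V. E a t}" using psubset_card_mono[OF _ sub] fV by auto
  with mx[OF ab(1)] show False by simp
qed

lemma deg_formula:
  assumes sg: "sgraph V E" and iso: "graph_iso (V-{u}) (induced E (V-{u})) W F"
    and reg: "\<forall>a\<in>W. card {b\<in>W. F a b} = k" and t: "t \<in> V" "t\<noteq>u"
  shows "card {y\<in>V. E t y} = k + (if E t u then 1 else 0)"
proof -
  have fV: "finite V" and sym: "\<And>a b. E a b \<Longrightarrow> E b a" and inV: "\<And>a b. E a b \<Longrightarrow> b \<in> V"
    using sg unfolding sgraph_def by auto
  obtain f where bij: "bij_betw f (V-{u}) W"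
    and pres: "\<forall>x\<in>V-{u}. \<forall>y\<in>V-{u}. induced E (V-{u}) x y \<longleftrightarrow> F (f x) (f y)"
    using iso unfolding graph_iso_def by blast
  have pres': "E x y \<longleftrightarrow> F (f x) (f y)" if "x\<in>V-{u}" "y\<in>V-{u}" for x y
    using pres that unfolding induced_def by auto
  let ?A = "{y\<in>V-{u}. E t y}"
  have tA: "t \<in> V - {u}" using t by auto
  have img: "f ` ?A = {b\<in>W. F (f t) b}"
  proof
    show "f ` ?A \<subseteq> {b\<in>W. F (f t) b}" using bij pres' tA by (auto simp: bij_betw_def)
    show "{b\<in>W. F (f t) b} \<subseteq> f ` ?A"
    proof
      fix b assume b: "b \<in> {b\<in>W. F (f t) b}"
      then obtain y where y: "y \<in> V-{u}" "b = f y" using bij unfolding bij_betw_def by auto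
      then have "E t y" using pres'[OF tA y(1)] b by simp
      thus "b \<in> f ` ?A" using y by auto
    qed
  qed
  have "inj_on f ?A" by (rule inj_on_subset[of f "V-{u}"]) (use bij in \<open>auto simp: bij_betw_def\<close>)
  hence "card ?A = card {b\<in>W. F (f t) b}" using img card_image by metis
  also have "\<dots> = k" using reg bij tA by (auto simp: bij_betw_def)
  finally have cA: "card ?A = k" .
  have "{y\<in>V. E t y} = ?A \<union> (if E t u then {u} else {})" using inV by auto
  moreover have "finite ?A" using fV by auto
  ultimately show ?thesis using cA by auto
qed

lemma one_reg_complete:
  assumes sg: "sgraph W F" and con: "connected_graph W F" and reg: "\<forall>a\<in>W. card {b\<in>W. F a b} = 1"
  shows "complete_graph W F"
  unfolding complete_graph_def
proof (intro ballI impI)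
  fix a b assume a: "a \<in> W" and b: "b \<in> W" and ne: "a \<noteq> b"
  have sym: "\<And>a b. F a b \<Longrightarrow> F b a" and inW: "\<And>a b. F a b \<Longrightarrow> b \<in> W"
    using sg unfolding sgraph_def by auto
  obtain c where c: "{x\<in>W. F a x} = {c}" using reg a card_1_singletonE by blast
  have Fac: "F a c" using c by auto
  have cW: "c \<in> W" using c by auto
  have "a \<in> {x\<in>W. F c x}" using Fac sym a by auto
  then have c2: "{x\<in>W. F c x} = {a}" using reg cW card_1_singletonE by (metis singletonD)
  have reach: "y \<in> {a, c}" if "F\<^sup>*\<^sup>* a y" for y
    using that
  proof (induction rule: rtranclp_induct)
    case base then show ?case by simp
  next
    case (step y z)
    have "z \<in> W" using step(2) inW by auto
    then show ?case using step c c2 by auto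
  qed
  have "F\<^sup>*\<^sup>* a b" using con a b unfolding connected_graph_def by auto
  then have "b = c" using reach ne by auto
  then show "F a b" using Fac by simp
qed

theorem lemma3p3:
  fixes VH :: "'b set" and EH :: "'b \<Rightarrow> 'b \<Rightarrow> bool"
    and VG :: "'a set" and EG :: "'a \<Rightarrow> 'a \<Rightarrow> bool"
  assumes "sgraph VH EH"
    and "\<not> complete_graph VH EH"
    and "connected_graph VH EH"
    and "regular VH EH"
    and "in_obs_star VG EG VH EH"
  shows "\<exists>u\<in>VG. \<exists>v\<in>VG. u \<noteq> v \<and> closed_nbhd VG EG u = closed_nbhd VG EG v
           \<and> graph_iso (VG - {u}) (induced EG (VG - {u})) VH EH
           \<and> graph_iso (VG - {v}) (induced EG (VG - {v})) VH EH"
proof -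
  note sgH = assms(1)
  have fW: "finite VH" and symH: "\<And>a b. EH a b \<Longrightarrow> EH b a" and irrH: "\<And>a. \<not> EH a a"
    and inH: "\<And>a b. EH a b \<Longrightarrow> b \<in> VH"
    using sgH unfolding sgraph_def by auto
  have mo: "min_obstruction VG EG VH EH" and card: "card VG = card VH + 1"
    using assms(5) unfolding in_obs_star_def by auto
  have sgG: "sgraph VG EG" using mo unfolding min_obstruction_def by auto
  have fV: "finite VG" and sym: "\<And>a b. EG a b \<Longrightarrow> EG b a" and irr: "\<And>a. \<not> EG a a"
    and inV: "\<And>a b. EG a b \<Longrightarrow> b \<in> VG" and inV1: "\<And>a b. EG a b \<Longrightarrow> a \<in> VG"
    using sgG unfolding sgraph_def by auto
  obtain k where reg: "\<forall>a\<in>VH. card {b\<in>VH. EH a b} = k"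
    using assms(4) unfolding regular_def by blast
  obtain w where wV: "w \<in> VG" and isow: "graph_iso (VG-{w}) (induced EG (VG-{w})) VH EH"
    using exists_good[OF mo card fW] by blast
  have degw: "card {y\<in>VG. EG t y} = k + (if EG t w then 1 else 0)" if "t\<in>VG" "t\<noteq>w" for t
    using deg_formula[OF sgG isow reg that] .
  have twin: ?thesis if zV: "z \<in> VG" and zw: "z\<noteq>w"
     and isoz: "graph_iso (VG-{z}) (induced EG (VG-{z})) VH EH" for z
  proof -
    have agree: "EG t w \<longleftrightarrow> EG t z" if "t\<in>VG" "t\<noteq>w" "t\<noteq>z" for t
      using degw[OF that(1,2)] deg_formula[OF sgG isoz reg that(1,3)] by (auto split: if_splits)
    show ?thesis
    proof (cases "EG w z")
      case True
      have "closed_nbhd VG EG w = closed_nbhd VG EG z"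
      proof (rule set_eqI)
        fix t show "t \<in> closed_nbhd VG EG w \<longleftrightarrow> t \<in> closed_nbhd VG EG z"
        proof -
          have e1: "EG w t \<longleftrightarrow> EG t w" using sym[of w t] sym[of t w] by (rule iffI)
          have e2: "EG z t \<longleftrightarrow> EG t z" using sym[of z t] sym[of t z] by (rule iffI)
          have e3: "EG z w" using sym[of w z] True by simp
          show ?thesis unfolding closed_nbhd_def using agree[of t] True e1 e2 e3 zV wV by auto
        qed
      qed
      note cn = this
      show ?thesis
      proof (rule bexI[of _ w], rule bexI[of _ z])
        show "w \<noteq> z \<and> closed_nbhd VG EG w = closed_nbhd VG EG z
           \<and> graph_iso (VG - {w}) (induced EG (VG - {w})) VH EH
           \<and> graph_iso (VG - {z}) (induced EG (VG - {z})) VH EH"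
          using zw cn isow isoz by simp
      qed (use wV zV in auto)
    next
      case False
      have "\<forall>t\<in>VG. EG w t \<longleftrightarrow> EG z t" using agree False sym irr by blast
      moreover have "w \<noteq> z" using zw by simp
      ultimately have False using pd[OF mo wV zV] by simp
      then show ?thesis ..
    qed
  qed
  show ?thesis
  proof (cases "\<exists>z\<in>VG. z\<noteq>w \<and> graph_iso (VG-{z}) (induced EG (VG-{z})) VH EH")
    case True then show ?thesis using twin by blast
  next
    case False
    define d where "d = card {y\<in>VG. EG w y}"
    have dichot: "(EG w z \<and> d = k+1) \<or> (\<not>EG w z \<and> k = d+1)" if zV: "z\<in>VG" and zw: "z\<noteq>w" for z
    proof -
      obtain x y where xy: "x\<in>VG" "y\<in>VG" "x \<noteq> z" "y \<noteq> z" "x \<noteq> y" "EG z x" "\<not> EG z y"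
        "\<forall>t\<in>VG. t \<noteq> z \<longrightarrow> (EG x t \<longleftrightarrow> EG y t)"
      proof -
        have ng: "\<not> graph_iso (VG-{z}) (induced EG (VG-{z})) VH EH" using False zV zw by blast
        have "\<exists>x\<in>VG. \<exists>y\<in>VG. x \<noteq> z \<and> y \<noteq> z \<and> x \<noteq> y \<and> EG z x \<and> \<not> EG z y
          \<and> (\<forall>t\<in>VG. t \<noteq> z \<longrightarrow> (EG x t \<longleftrightarrow> EG y t))"
          using del_cases[OF mo card fW zV]
        proof (rule disjE)
          assume "graph_iso (VG-{z}) (induced EG (VG-{z})) VH EH" with ng show ?thesis by contradiction
        qed
        then obtain x y where "x\<in>VG" "y\<in>VG" and c: "x \<noteq> z \<and> y \<noteq> z \<and> x \<noteq> y \<and> EG z x \<and> \<not> EG z y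
          \<and> (\<forall>t\<in>VG. t \<noteq> z \<longrightarrow> (EG x t \<longleftrightarrow> EG y t))" by (elim bexE) 
        show ?thesis using c \<open>x\<in>VG\<close> \<open>y\<in>VG\<close> by (intro that[of x y]) simp_all
      qed
      have Nx: "{t\<in>VG. EG x t} = insert z {t\<in>VG. EG y t}"
      proof (rule set_eqI)
        fix t show "t \<in> {t\<in>VG. EG x t} \<longleftrightarrow> t \<in> insert z {t\<in>VG. EG y t}"
          using xy(8)[rule_format, of t] xy(6) sym[of z x] zV by auto
      qed
      have zn: "z \<notin> {t\<in>VG. EG y t}" using xy(7) sym by blast
      have cx: "card {t\<in>VG. EG x t} = card {t\<in>VG. EG y t} + 1" using Nx zn fV by simp
      consider "x\<noteq>w \<and> y\<noteq>w" | "y = w" | "x = w" by blast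
      then show ?thesis
      proof cases
        case 1
        have "EG x w \<longleftrightarrow> EG y w" using xy(8) wV zw by auto
        then have False using degw[OF xy(1)] degw[OF xy(2)] 1 cx by (auto split: if_splits)
        then show ?thesis ..
      next
        case 2
        then have xw: "x \<noteq> w" using xy(5) by auto
        have "\<not> EG x w"
        proof
          assume "EG x w" hence "x \<in> {t\<in>VG. EG y t}" using sym[of x w] xy(1) 2 by simp
          hence "x \<in> {t\<in>VG. EG x t}" using Nx by blast
          thus False using irr[of x] by simp
        qed
        then have "card {t\<in>VG. EG x t} = k" using degw[OF xy(1) xw] by simp
        moreover have "\<not> EG w z" using xy(7) 2 sym[of w z] by auto
        ultimately show ?thesis using cx 2 d_def by simp
      next
        case 3
        then have yw: "y \<noteq> w" using xy(5) by auto
        have "\<not> EG y w"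
        proof
          assume "EG y w" hence "y \<in> {t\<in>VG. EG x t}" using sym[of y w] xy(2) 3 by simp
          hence "y \<in> {t\<in>VG. EG y t}" using Nx xy(4) by blast
          thus False using irr[of y] by simp
        qed
        then have "card {t\<in>VG. EG y t} = k" using degw[OF xy(2) yw] by simp
        moreover have "EG w z" using xy(6) 3 sym[of z w] by auto
        ultimately show ?thesis using cx 3 d_def by simp
      qed
    qed
    have VHne: "VH \<noteq> {}" using assms(3) unfolding connected_graph_def by auto
    have "card VG \<ge> 2" using card VHne fW by (simp add: card_gt_0_iff Suc_le_eq)
    then have "VG - {w} \<noteq> {}" using fV wV
    proof -
      have "card (VG - {w}) = card VG - 1" using fV wV by simp
      show ?thesis
      proof
        assume "VG - {w} = {}"
        then have "card (VG - {w}) = 0" by (simp only: card.empty)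
        with \<open>card (VG - {w}) = card VG - 1\<close> \<open>card VG \<ge> 2\<close> show False by simp
      qed
    qed
    then obtain z0 where z0: "z0 \<in> VG" "z0 \<noteq> w" by blast
    obtain a b where ab: "a\<in>VH" "b\<in>VH" "a\<noteq>b" "\<not> EH a b" using assms(2) unfolding complete_graph_def by blast
    show ?thesis
    proof (cases "EG w z0")
      case True
      then have dk: "d = k+1" using dichot[OF z0] by simp
      have all: "EG w z" if "z\<in>VG" "z\<noteq>w" for z using dichot[OF that] dk by auto
      have "{y\<in>VG. EG w y} = VG - {w}" using all irr by auto
      then have "d = card VH" using d_def card fV wV by simp
      have "{c\<in>VH. EH a c} \<subseteq> VH - {a,b}" using ab irrH inH by auto
      then have "card {c\<in>VH. EH a c} \<le> card (VH - {a,b})" using fW by (intro card_mono) auto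
      also have "\<dots> = card VH - 2" using ab by (simp add: card_Diff_subset)
      finally have "k \<le> card VH - 2" using reg ab by simp
      moreover have "card {a,b} \<le> card VH" using ab fW by (intro card_mono) auto
      then have "card VH \<ge> 2" using ab(3) by simp
      ultimately show ?thesis using \<open>d = card VH\<close> dk by simp
    next
      case False
      then have kd: "k = d+1" using dichot[OF z0] by simp
      have all: "\<not> EG w z" if "z\<in>VG" "z\<noteq>w" for z using dichot[OF that] kd by auto
      have "{y\<in>VG. EG w y} = {}" using all irr by auto
      then have "d = 0" unfolding d_def by (simp only: card.empty)
      then have "k = 1" using kd by simp
      then have "complete_graph VH EH" using one_reg_complete[OF sgH assms(3)] reg by simp
      then show ?thesis using assms(2) by simp
    qed
  qed
qed

end
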